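(* Let $\mathbf{r},\mathbf{s}$ be two duplicate-free TP relations. The number of lineage-aware temporal windows produced by the window advancer, i.e., $|\mathbf{W}(\mathbf{r},\mathbf{s})|$, is at most $n_r+n_s-f_d$, where $n_r$ and $n_s$ are the numbers of interval start and end points in $\mathbf{r}$ and $\mathbf{s}$ respectively, and $f_d$ is the number of distinct facts occurring in $\mathbf{r}$ and $\mathbf{s}$.
   Context: A TP relation $\mathbf{r}$ is a finite set of tuples $r$ with fact $r.F$ (a tuple of ordinary attribute values), lineage $r.\lambda$ (for a base tuple, its own identifier), time interval $r.T=[T_s,T_e)$ over a finite ordered domain of time points, and probability $r.p\in(0,1]$; each tuple contributes one start point $T_s$ and one end point $T_e$. $\mathbf{r}$ is duplicate-free iff any two distinct tuples with the same fact have disjoint intervals. $\lambda^{\mathbf{r},f}_t$ is $r.\lambda$ if some $r\in\mathbf{r}$ has $r.F=f$ and $t\in r.T$, and $\mathtt{null}$ otherwise. The set $\mathbf{W}(\mathbf{r},\mathbf{s})$ of lineage-aware windows (which the window-advancer algorithm enumerates) consists of tuples $\tilde w=(F,T,\lambda_r,\lambda_s)$, $T$ an interval, $\lambda_r,\lambda_s$ lineage expressions or $\mathtt{null}$, such that for all $t\in\tilde w.T$: ($\lambda^{\mathbf{r},\tilde w.F}_t\neq\mathtt{null}$ or $\lambda^{\mathbf{s},\tilde w.F}_t\neq\mathtt{null}$) and $\tilde w.\lambda_r=\lambda^{\mathbf{r},\tilde w.F}_t$ and $\tilde w.\lambda_s=\lambda^{\mathbf{s},\tilde w.F}_t$; and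 for all $t'\notin\tilde w.T$: $\tilde w.\lambda_r\neq\lambda^{\mathbf{r},\tilde w.F}_{t'}$ or $\tilde w.\lambda_s\neq\lambda^{\mathbf{s},\tilde w.F}_{t'}$. *)

theory Defs
  imports Complex_Main
begin

text \<open>A TP tuple: fact F, lineage (base-tuple identifier), interval [Ts, Te), probability p.\<close>
datatype ('f, 'l, 't) tp_tuple =
  TPT (fact: 'f) (lin: 'l) (ts: 't) (te: 't) (prob: real)

definition ivl :: "('f, 'l, 't::linorder) tp_tuple \<Rightarrow> 't set" where
  "ivl r = {ts r..<te r}"

text \<open>A TP relation: finite set of tuples with nonempty intervals, probability in (0,1],
  and lineage = the tuple's own identifier (hence distinct tuples have distinct lineage).\<close>
definition tp_relation :: "('f, 'l, 't::linorder) tp_tuple set \<Rightarrow> bool" where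
  "tp_relation R \<longleftrightarrow> finite R \<and>
     (\<forall>r\<in>R. ts r < te r \<and> 0 < prob r \<and> prob r \<le> 1) \<and> inj_on lin R"

definition duplicate_free :: "('f, 'l, 't::linorder) tp_tuple set \<Rightarrow> bool" where
  "duplicate_free R \<longleftrightarrow>
     (\<forall>r1\<in>R. \<forall>r2\<in>R. r1 \<noteq> r2 \<and> fact r1 = fact r2 \<longrightarrow> ivl r1 \<inter> ivl r2 = {})"

text \<open>lineage_at R f t is the lineage lambda^{R,f}_t; None encodes null.\<close>
definition lineage_at :: "('f, 'l, 't::linorder) tp_tuple set \<Rightarrow> 'f \<Rightarrow> 't \<Rightarrow> 'l option" where
  "lineage_at R f t =
     (if \<exists>r\<in>R. fact r = f \<and> t \<in> ivl r
      then Some (lin (SOME r. r \<in> R \<and> fact r = f \<and> t \<in> ivl r))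
      else None)"

definition windows ::
  "('f, 'l, 't::linorder) tp_tuple set \<Rightarrow> ('f, 'l, 't) tp_tuple set
     \<Rightarrow> ('f \<times> 't set \<times> 'l option \<times> 'l option) set" where
  "windows R S = {(F, T, lr, ls).
     (\<exists>a b. a < b \<and> T = {a..<b}) \<and>
     (\<forall>t\<in>T. (lineage_at R F t \<noteq> None \<or> lineage_at S F t \<noteq> None) \<and>
              lr = lineage_at R F t \<and> ls = lineage_at S F t) \<and>
     (\<forall>t'. t' \<notin> T \<longrightarrow> lr \<noteq> lineage_at R F t' \<or> ls \<noteq> lineage_at S F t')}"

text \<open>Number of interval start and end points (each tuple contributes one of each).\<close>
definition num_points :: "('f, 'l, 't) tp_tuple set \<Rightarrow> nat" where
  "num_points R = 2 * card R"

definition num_distinct_facts :: "('f, 'l, 't) tp_tuple set \<Rightarrow> ('f, 'l, 't) tp_tuple set \<Rightarrow> nat" where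
  "num_distinct_facts R S = card (fact ` R \<union> fact ` S)"

end

theory Submission
  imports Defs
begin

lemma lin_const:
  fixes X :: "('f, 'l, 't::linorder) tp_tuple set"
  assumes "p \<le> t"
    and "\<forall>r\<in>X. fact r = F \<longrightarrow> \<not>(p < ts r \<and> ts r \<le> t) \<and> \<not>(p < te r \<and> te r \<le> t)"
  shows "lineage_at X F p = lineage_at X F t"
proof -
  have "\<And>r. r \<in> X \<Longrightarrow> fact r = F \<Longrightarrow> (p \<in> ivl r \<longleftrightarrow> t \<in> ivl r)"
  proof -
    fix r assume r: "r \<in> X" "fact r = F"
    then have h: "\<not>(p < ts r \<and> ts r \<le> t)" "\<not>(p < te r \<and> te r \<le> t)" using assms(2) by auto
    show "(p \<in> ivl r \<longleftrightarrow> t \<in> ivl r)"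
      unfolding ivl_def using h assms(1)
      by (simp add: not_less) (meson order.trans less_le_trans not_le)
  qed
  then have "(\<lambda>r. r \<in> X \<and> fact r = F \<and> p \<in> ivl r) = (\<lambda>r. r \<in> X \<and> fact r = F \<and> t \<in> ivl r)"
    by blast
  then show ?thesis unfolding lineage_at_def by (simp add: Bex_def) blast
qed

lemma lin_some:
  assumes "lineage_at X F t \<noteq> None"
  shows "\<exists>r\<in>X. fact r = F \<and> ts r \<le> t \<and> t < te r"
  using assms unfolding lineage_at_def ivl_def by (auto split: if_splits)

theorem proposition1:
  fixes R S :: "('f, 'l, 't::linorder) tp_tuple set"
  assumes "tp_relation R" and "tp_relation S"
    and "duplicate_free R" and "duplicate_free S"
  shows "finite (windows R S) \<and>
    int (card (windows R S)) \<le>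
      int (num_points R) + int (num_points S) - int (num_distinct_facts R S)"
proof -
  define U where "U = R \<union> S"
  define E where "E F = ts ` {r\<in>U. fact r = F} \<union> te ` {r\<in>U. fact r = F}" for F
  define Q where "Q = (\<lambda>r. (fact r, ts r)) ` U \<union> (\<lambda>r. (fact r, te r)) ` U"
  define FS where "FS = fact ` U"
  define M where "M = (\<lambda>F. (F, Max (E F))) ` FS"
  define g where "g = (\<lambda>(F::'f, T::'t set, lr::'l option, ls::'l option). (F, LEAST t. t \<in> T))"
  have finR: "finite R" and finS: "finite S" using assms(1,2) unfolding tp_relation_def by auto
  then have finU: "finite U" unfolding U_def by auto
  have finE: "finite (E F)" for F unfolding E_def using finU by auto
  have finQ: "finite Q" unfolding Q_def using finU by auto
  have MQ: "M \<subseteq> Q"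
  proof
    fix x assume "x \<in> M"
    then obtain F where F: "F \<in> FS" "x = (F, Max (E F))" unfolding M_def by auto
    then obtain r where r: "r \<in> U" "fact r = F" unfolding FS_def by auto
    then have "E F \<noteq> {}" unfolding E_def by auto
    then have "Max (E F) \<in> E F" using finE Max_in by blast
    then show "x \<in> Q" using F unfolding E_def Q_def by auto
  qed
  have cardM: "card M = card FS"
    unfolding M_def by (rule card_image) (auto intro: inj_onI)
  have key: "g w \<in> Q - M" if w: "w \<in> windows R S" for w
  proof -
    obtain F T lr ls where wd: "w = (F, T, lr, ls)" by (cases w) auto
    from w obtain a b where ab: "a < b" "T = {a..<b}"
      and inside: "\<forall>t\<in>T. (lineage_at R F t \<noteq> None \<or> lineage_at S F t \<noteq> None) \<and>
              lr = lineage_at R F t \<and> ls = lineage_at S F t"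
      and outside: "\<forall>t'. t' \<notin> T \<longrightarrow> lr \<noteq> lineage_at R F t' \<or> ls \<noteq> lineage_at S F t'"
      unfolding wd windows_def by auto
    have aT: "a \<in> T" using ab by auto
    have lea: "(LEAST t. t \<in> T) = a" using ab by (auto intro!: Least_equality)
    have gw: "g w = (F, a)" unfolding g_def wd using lea by simp
    obtain r where r: "r \<in> U" "fact r = F" "ts r \<le> a" "a < te r"
      using inside aT lin_some[of R F a] lin_some[of S F a] unfolding U_def by blast
    have aE: "a \<in> E F"
    proof (rule ccontr)
      assume naE: "a \<notin> E F"
      define P where "P = {e \<in> E F. e \<le> a}"
      have "ts r \<in> P" unfolding P_def E_def using r by auto
      then have Pne: "P \<noteq> {}" by auto
      have finP: "finite P" unfolding P_def using finE by auto
      define p where "p = Max P"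
      have pP: "p \<in> P" unfolding p_def using Pne finP Max_in by blast
      then have "p < a" using naE unfolding P_def by (auto simp: order.order_iff_strict)
      have nob: "\<not>(p < e \<and> e \<le> a)" if "e \<in> E F" for e
      proof
        assume "p < e \<and> e \<le> a"
        then have "e \<in> P" using that unfolding P_def by auto
        then have "e \<le> p" unfolding p_def using finP by auto
        then show False using \<open>p < e \<and> e \<le> a\<close> by auto
      qed
      have hyp: "\<forall>r\<in>X. fact r = F \<longrightarrow> \<not>(p < ts r \<and> ts r \<le> a) \<and> \<not>(p < te r \<and> te r \<le> a)"
        if "X \<subseteq> U" for X
      proof (intro ballI impI)
        fix r' assume "r' \<in> X" "fact r' = F"
        then have "ts r' \<in> E F" "te r' \<in> E F" using that unfolding E_def by auto
        then show "\<not>(p < ts r' \<and> ts r' \<le> a) \<and> \<not>(p < te r' \<and> te r' \<le> a)" using nob by blast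
      qed
      have "lineage_at R F p = lineage_at R F a"
        using lin_const[of p a R F] hyp[of R] \<open>p < a\<close> unfolding U_def by auto
      moreover have "lineage_at S F p = lineage_at S F a"
        using lin_const[of p a S F] hyp[of S] \<open>p < a\<close> unfolding U_def by auto
      moreover have "p \<notin> T" using \<open>p < a\<close> ab by auto
      ultimately show False using outside inside aT by metis
    qed
    have "(F, a) \<in> Q" using aE unfolding E_def Q_def by auto
    moreover have "(F, a) \<notin> M"
    proof
      assume "(F, a) \<in> M"
      then have "a = Max (E F)" unfolding M_def by auto
      moreover have "te r \<in> E F" unfolding E_def using r by auto
      ultimately have "te r \<le> a" using finE by auto
      then show False using r by auto
    qed
    ultimately show ?thesis using gw by auto
  qed
  have inj: "inj_on g (windows R S)"
  proof (rule inj_onI)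
    fix w1 w2 assume w1: "w1 \<in> windows R S" and w2: "w2 \<in> windows R S" and eq: "g w1 = g w2"
    obtain F1 T1 lr1 ls1 where wd1: "w1 = (F1, T1, lr1, ls1)" by (cases w1) auto
    obtain F2 T2 lr2 ls2 where wd2: "w2 = (F2, T2, lr2, ls2)" by (cases w2) auto
    from w1 obtain a1 b1 where ab1: "a1 < b1" "T1 = {a1..<b1}"
      and in1: "\<forall>t\<in>T1. lr1 = lineage_at R F1 t \<and> ls1 = lineage_at S F1 t"
      and out1: "\<forall>t'. t' \<notin> T1 \<longrightarrow> lr1 \<noteq> lineage_at R F1 t' \<or> ls1 \<noteq> lineage_at S F1 t'"
      unfolding wd1 windows_def by auto
    from w2 obtain a2 b2 where ab2: "a2 < b2" "T2 = {a2..<b2}"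
      and in2: "\<forall>t\<in>T2. lr2 = lineage_at R F2 t \<and> ls2 = lineage_at S F2 t"
      and out2: "\<forall>t'. t' \<notin> T2 \<longrightarrow> lr2 \<noteq> lineage_at R F2 t' \<or> ls2 \<noteq> lineage_at S F2 t'"
      unfolding wd2 windows_def by auto
    have l1: "(LEAST t. t \<in> T1) = a1" using ab1 by (auto intro!: Least_equality)
    have l2: "(LEAST t. t \<in> T2) = a2" using ab2 by (auto intro!: Least_equality)
    have FF: "F1 = F2" and aa: "a1 = a2" using eq l1 l2 unfolding g_def wd1 wd2 by auto
    have "a1 \<in> T1" "a2 \<in> T2" using ab1 ab2 by auto
    then have lr: "lr1 = lr2" "ls1 = ls2" using in1 in2 FF aa by auto
    have "T1 = T2"
    proof (intro set_eqI iffI)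
      fix t assume "t \<in> T1" then show "t \<in> T2" using in1 out2 lr FF by metis
    next
      fix t assume "t \<in> T2" then show "t \<in> T1" using in2 out1 lr FF by metis
    qed
    then show "w1 = w2" using wd1 wd2 FF lr by auto
  qed
  have sub: "g ` windows R S \<subseteq> Q - M" using key by auto
  have finW: "finite (windows R S)"
    using finite_imageD[OF finite_subset[OF sub] inj] finQ by auto
  have "card (windows R S) = card (g ` windows R S)" using card_image[OF inj] by simp
  also have "\<dots> \<le> card (Q - M)" using card_mono[OF _ sub] finQ by auto
  also have "\<dots> = card Q - card M" using card_Diff_subset[OF finite_subset[OF MQ finQ] MQ] .
  finally have c1: "card (windows R S) \<le> card Q - card FS" using cardM by simp
  have "card Q \<le> card ((\<lambda>r. (fact r, ts r)) ` U) + card ((\<lambda>r. (fact r, te r)) ` U)"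
    unfolding Q_def by (rule card_Un_le)
  also have "\<dots> \<le> card U + card U" using card_image_le[OF finU] add_mono by metis
  finally have c2: "card Q \<le> 2 * card U" by simp
  have c3: "card U \<le> card R + card S" unfolding U_def by (rule card_Un_le)
  have c4: "card FS \<le> card Q" using cardM card_mono[OF finQ MQ] by simp
  have fs: "num_distinct_facts R S = card FS"
    unfolding num_distinct_facts_def FS_def U_def by (simp add: image_Un)
  show ?thesis
    using finW c1 c2 c3 c4 fs unfolding num_points_def by linarith
qed

end
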